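(* $$\sum _{n=0}^{\infty } \frac{\binom{2 n}{n}^2 H_{2 n}}{16^n(2 n - 1)} = \frac{6 \ln (2)-2}{\pi }.$$
   Context: $H_k = \sum_{j=1}^k \frac1j$ is the $k$-th harmonic number, with $H_0 = 0$. *)

theory Defs
  imports "HOL-Analysis.Analysis"
begin

end

theory Submission
  imports Defs "HOL-Real_Asymp.Real_Asymp"
begin


lemma central_rec: "real (Suc n) * real ((2*Suc n) choose Suc n) = 2 * (2*real n + 1) * real ((2*n) choose n)"
proof -
  have e1: "Suc n * (Suc (Suc (2*n)) choose Suc n) = Suc (Suc (2*n)) * (Suc (2*n) choose n)"
    by (rule Suc_times_binomial)
  have e2: "Suc n * (Suc (2*n) choose Suc n) = Suc (2*n) * ((2*n) choose n)"
    by (rule Suc_times_binomial)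
  have e3: "(Suc (2*n) choose n) = (Suc (2*n) choose Suc n)"
    using binomial_symmetric[of n "Suc (2*n)"] by simp
  have s: "2 * Suc n = Suc (Suc (2*n))" by simp
  define X where "X = (Suc (Suc (2*n)) choose Suc n)"
  define Y where "Y = (Suc (2*n) choose Suc n)"
  define Z where "Z = ((2*n) choose n)"
  have e1': "Suc n * X = Suc (Suc (2*n)) * Y" using e1 e3 unfolding X_def Y_def by simp
  have e2': "Suc n * Y = Suc (2*n) * Z" using e2 unfolding Y_def Z_def by simp
  have "Suc n * (Suc n * X) = Suc n * (2 * Suc (2*n) * Z)"
  proof -
    have "Suc n * (Suc n * X) = Suc n * (Suc (Suc (2*n)) * Y)" using e1' by simp
    also have "\<dots> = 2 * (Suc n * Y) * Suc n" by simp
    also have "\<dots> = 2 * (Suc (2*n) * Z) * Suc n" using e2' by simp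
    finally show ?thesis by simp
  qed
  hence "Suc n * X = 2 * Suc (2*n) * Z" by (metis nat.distinct(1) mult_left_cancel)
  hence "Suc n * (Suc (Suc (2*n)) choose Suc n) = 2 * Suc (2*n) * ((2*n) choose n)" unfolding X_def Z_def .
  hence "real (Suc n * (Suc (Suc (2*n)) choose Suc n)) = real (2 * Suc (2*n) * ((2*n) choose n))" by (rule arg_cong)
  thus ?thesis unfolding s by (simp del: binomial_Suc_Suc add: algebra_simps)
qed

fun ww :: "real \<Rightarrow> nat \<Rightarrow> real" where
  "ww c 0 = 1"
| "ww c (Suc n) = ww c n * ((real n + 1/2) * (real n - 1/2)) / ((real n + 1) * (c + real n))"

definition hh :: "real \<Rightarrow> nat \<Rightarrow> real" where
  "hh c n = (\<Sum>k<n. 1 / (c + real k))"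

definition aa :: "nat \<Rightarrow> real" where "aa n = (real ((2*n) choose n))^2 / 16^n"

lemma aa_Suc: "aa (Suc n) = aa n * ((2*real n + 1) / (2*real n + 2))^2"
proof -
  have r: "real ((2*Suc n) choose Suc n) = 2 * (2*real n + 1) * real ((2*n) choose n) / (real n + 1)"
    using central_rec[of n] by (simp add: field_simps)
  define C where "C = real ((2*n) choose n)"
  have p: "(0::real) < real n + 1" by simp
  have "aa (Suc n) = (2 * (2*real n + 1) * C / (real n + 1))^2 / 16^(Suc n)"
    unfolding aa_def r C_def by simp
  also have "\<dots> = (C^2 / 16^n) * ((2*real n + 1) / (2*real n + 2))^2"
  proof -
    have a: "real n + 1 \<noteq> 0" "2 * real n + 2 \<noteq> 0" "(16::real)^n \<noteq> 0" by simp_all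
    have b: "2 * real n + 2 = 2 * (real n + 1)" by simp
    show ?thesis unfolding b power_divide power_mult_distrib using a by (simp add: field_simps)
  qed
  finally show ?thesis unfolding aa_def C_def .
qed

lemma ww1_aa: "ww 1 n = - aa n / (2 * real n - 1)"
proof (induction n)
  case 0 then show ?case by (simp add: aa_def)
next
  case (Suc n)
  have nz: "2 * real n - 1 \<noteq> 0"
  proof
    assume "2 * real n - 1 = 0" hence "real (2*n) = real 1" by simp
    hence "2*n = 1" by (simp only: of_nat_eq_iff)
    thus False by presburger
  qed
  have p: "2*real n + 1 \<noteq> 0" "real n + 1 \<noteq> 0" "2*real n + 2 \<noteq> 0" by (simp_all add: add_nonneg_pos)
  show ?case unfolding ww.simps Suc.IH aa_Suc using nz p
    by (simp add: divide_simps) (simp add: algebra_simps power2_eq_square)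
qed

lemma hh_Suc: "hh c (Suc n) = hh c n + 1 / (c + real n)"
  unfolding hh_def by simp

lemma hh_one: "hh 1 n = harm n"
  unfolding hh_def harm_altdef by (intro sum.cong) (auto simp: field_simps)

lemma ww_shift: assumes "c > 0" shows "ww (c+1) n = ww c n * c / (c + real n)"
proof (induction n)
  case 0 then show ?case using assms by simp
next
  case (Suc n)
  have p: "c + real n \<noteq> 0" "c + real n + 1 \<noteq> 0" "real n + 1 \<noteq> 0" "c + 1 + real n \<noteq> 0"
    using assms by (simp_all add: add_pos_nonneg add_nonneg_pos)
  show ?case unfolding ww.simps Suc.IH using p by (simp add: divide_simps) (simp add: algebra_simps)
qed

lemma hh_shift: assumes "c > 0" shows "hh (c+1) n = hh c n - 1/c + 1 / (c + real n)"
proof (induction n)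
  case 0 then show ?case using assms by (simp add: hh_def)
next
  case (Suc n)
  show ?case using Suc.IH unfolding hh_Suc by (simp add: algebra_simps)
qed

definition dl :: "real \<Rightarrow> nat \<Rightarrow> real" where
  "dl c n = - c * ww c n * ((real n)^2 - 1/4) / (c + real n)"

lemma tele1: assumes c: "c > 0"
  shows "(\<Sum>n<Suc N. c^2 * ww c n - (c^2 - 1/4) * ww (c+1) n) = dl c N"
proof (induction N)
  case 0 then show ?case using c by (simp add: dl_def divide_simps)
next
  case (Suc N)
  have p: "c + real N \<noteq> 0" "c + real N + 1 \<noteq> 0" "real N + 1 \<noteq> 0" "c \<noteq> 0"
    using c by (simp_all add: add_pos_nonneg add_nonneg_pos)
  have "(\<Sum>n<Suc (Suc N). c^2 * ww c n - (c^2 - 1/4) * ww (c+1) n)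
     = dl c N + (c^2 * ww c (Suc N) - (c^2 - 1/4) * ww (c+1) (Suc N))"
    using Suc.IH by simp
  also have "\<dots> = dl c (Suc N)"
    unfolding dl_def ww_shift[OF c] using p
    by (simp add: divide_simps) (simp add: algebra_simps power2_eq_square)
  finally show ?case .
qed


definition tau :: "real \<Rightarrow> nat \<Rightarrow> real" where
  "tau c n = 2*c*ww c n - c^2 * ww c n * hh c n - 2*c*ww (c+1) n + (c^2 - 1/4) * ww (c+1) n * hh (c+1) n"

definition ep :: "real \<Rightarrow> nat \<Rightarrow> real" where
  "ep c n = - ww c n * ((real n)^2 - 1/4) / (c + real n) * (real n / (c + real n) - c * hh c n)"

lemma tele2: assumes c: "c > 0"
  shows "(\<Sum>n<Suc N. tau c n) = ep c N"
proof (induction N)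
  case 0 then show ?case using c by (simp add: ep_def tau_def hh_def divide_simps)
next
  case (Suc N)
  have p: "c + real N \<noteq> 0" "c + real N + 1 \<noteq> 0" "real N + 1 \<noteq> 0" "c \<noteq> 0"
    using c by (simp_all add: add_pos_nonneg add_nonneg_pos)
  have "(\<Sum>n<Suc (Suc N). tau c n) = ep c N + tau c (Suc N)"
    using Suc.IH by simp
  also have "\<dots> = ep c (Suc N)"
    unfolding ep_def tau_def ww_shift[OF c] hh_shift[OF c] hh_Suc using p
    by (simp add: divide_simps) (simp add: algebra_simps power2_eq_square)
  finally show ?case .
qed



lemma ww_Suc': "ww c (Suc n) = ww c n * (((real n + 1/2) * (real n - 1/2)) / ((real n + 1) * (c + real n)))"
  by simp

lemma ww1_abs_le: assumes "n \<ge> 1" shows "\<bar>ww 1 n\<bar> \<le> 1 / (real n)^2"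
  using assms
proof (induction n rule: nat_induct_at_least)
  case base then show ?case by simp
next
  case (Suc n)
  have n1: "real n \<ge> 1" using Suc.hyps by simp
  define r where "r = ((real n + 1/2) * (real n - 1/2)) / ((real n + 1) * (1 + real n))"
  have r0: "r \<ge> 0" unfolding r_def using n1 by simp
  have r1: "r \<le> (real n)^2 / (real n + 1)^2"
    unfolding r_def using n1 by (simp add: divide_simps power2_eq_square algebra_simps)
  have "\<bar>ww 1 (Suc n)\<bar> = \<bar>ww 1 n\<bar> * r"
    unfolding ww_Suc' r_def[symmetric] using r0 by (simp add: abs_mult)
  also have "\<dots> \<le> (1 / (real n)^2) * ((real n)^2 / (real n + 1)^2)"
    by (rule mult_mono[OF Suc.IH r1]) (use r0 in auto)
  also have "\<dots> = 1 / (real (Suc n))^2" using n1 by (simp add: field_simps)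
  finally show ?case .
qed

lemma wwc_abs_le: assumes c: "c \<ge> 1" and "n \<ge> 1" shows "c * \<bar>ww c n\<bar> \<le> \<bar>ww 1 n\<bar>"
  using assms(2)
proof (induction n rule: nat_induct_at_least)
  case base then show ?case using c by simp
next
  case (Suc n)
  have n1: "real n \<ge> 1" using Suc.hyps by simp
  define r where "r = ((real n + 1/2) * (real n - 1/2)) / ((real n + 1) * (c + real n))"
  define r' where "r' = ((real n + 1/2) * (real n - 1/2)) / ((real n + 1) * (1 + real n))"
  have r0: "r \<ge> 0" unfolding r_def using n1 c by simp
  have r1: "r \<le> r'" unfolding r_def r'_def using n1 c
    by (intro divide_left_mono mult_left_mono) auto
  have "c * \<bar>ww c (Suc n)\<bar> = (c * \<bar>ww c n\<bar>) * r"
    unfolding ww_Suc' r_def[symmetric] using r0 by (simp add: abs_mult)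
  also have "\<dots> \<le> \<bar>ww 1 n\<bar> * r'"
    by (rule mult_mono[OF Suc.IH r1]) (use r0 in auto)
  also have "\<dots> = \<bar>ww 1 (Suc n)\<bar>"
    unfolding ww_Suc' r'_def[symmetric] using n1 unfolding r'_def by (simp add: abs_mult)
  finally show ?case .
qed

lemma wwc_abs_le': assumes c: "c \<ge> 1" shows "\<bar>ww c n\<bar> \<le> \<bar>ww 1 n\<bar>"
proof (cases "n \<ge> 1")
  case True
  have "\<bar>ww c n\<bar> \<le> c * \<bar>ww c n\<bar>" using c by (simp add: mult_le_cancel_right1)
  also have "\<dots> \<le> \<bar>ww 1 n\<bar>" by (rule wwc_abs_le[OF c True])
  finally show ?thesis .
next
  case False then have "n = 0" by simp
  then show ?thesis by simp
qed

lemma harm_sqrt: "harm n \<le> 2 * sqrt (real n)"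
proof (induction n)
  case 0 then show ?case by (simp add: harm_def)
next
  case (Suc n)
  define sq where "sq = sqrt (real n)"
  have s0: "sq \<ge> 0" unfolding sq_def by simp
  have ss: "sq^2 = real n" unfolding sq_def by simp
  have key: "(2 * sq + 1 / (sq^2 + 1))^2 \<le> 4 * (sq^2 + 1)"
  proof -
    have p: "sq^2 + 1 > 0" by (simp add: add_nonneg_pos)
    have "4 * sq * (sq^2 + 1) + 1 \<le> 4 * (sq^2 + 1)^2"
    proof -
      have "0 \<le> sq^2 * (2* sq - 1)^2" by simp
      moreover have "0 \<le> 7* sq^2 - 4* sq + 3"
      proof -
        have "0 \<le> 7*(sq - 2/7)^2" by simp
        thus ?thesis by (simp add: power2_eq_square algebra_simps)
      qed
      ultimately show ?thesis by (simp add: power2_eq_square algebra_simps power3_eq_cube)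
    qed
    moreover have p2: "0 < (sq^2 + 1)^2" using p by simp
    ultimately show ?thesis using p by (simp add: divide_simps power2_eq_square algebra_simps)
  qed
  have "harm (Suc n) = harm n + 1 / (real n + 1)" by (simp add: harm_Suc inverse_eq_divide)
  also have "\<dots> \<le> 2 * sq + 1 / (sq^2 + 1)" using Suc.IH unfolding sq_def ss[unfolded sq_def] by simp
  also have "\<dots> \<le> sqrt (4 * (sq^2 + 1))" by (rule real_le_rsqrt[OF key])
  also have "\<dots> = 2 * sqrt (real (Suc n))"
  proof -
    have f: "sqrt (4::real) = 2" by (rule real_sqrt_unique) auto
    have "4 * (sq^2 + 1) = 4 * real (Suc n)" using ss by simp
    thus ?thesis by (simp only: real_sqrt_mult f)
  qed
  finally show ?case .
qed

lemma hh_nonneg: "c > 0 \<Longrightarrow> hh c n \<ge> 0"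
  unfolding hh_def by (intro sum_nonneg) auto

lemma hh_le_harm: assumes "c \<ge> 1" shows "hh c n \<le> harm n"
  unfolding hh_one[symmetric] hh_def using assms
  by (intro sum_mono divide_left_mono) auto

definition gg :: "nat \<Rightarrow> real" where "gg n = \<bar>ww 1 n\<bar> * harm n"

lemma gg_le: "gg n \<le> 2 * real n powr (-3/2)"
proof (cases "n \<ge> 1")
  case False then show ?thesis by (simp add: gg_def harm_def)
next
  case True
  have n1: "real n \<ge> 1" using True by simp
  have "gg n \<le> (1 / (real n)^2) * (2 * sqrt (real n))"
    unfolding gg_def by (rule mult_mono[OF ww1_abs_le[OF True] harm_sqrt]) (auto simp: harm_nonneg)
  also have "\<dots> = 2 * real n powr (-3/2)"
  proof -
    have "sqrt (real n) = real n powr (1/2)" using n1 by (simp add: powr_half_sqrt)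
    moreover have "(real n)^2 = real n powr 2" using n1 by (simp add: powr_numeral)
    moreover have "real n powr (-3/2) = real n powr (1/2) / real n powr 2"
    proof -
      have "real n powr (-3/2) = real n powr (1/2 - 2)" by simp
      also have "\<dots> = real n powr (1/2) / real n powr 2" by (rule powr_diff)
      finally show ?thesis .
    qed
    ultimately show ?thesis by simp
  qed
  finally show ?thesis .
qed

lemma gg_summable: "summable gg"
proof (rule summable_comparison_test[of _ "\<lambda>n. 2 * real n powr (-3/2)"])
  show "\<exists>N. \<forall>n\<ge>N. norm (gg n) \<le> 2 * real n powr (-3/2)"
    using gg_le by (auto simp: gg_def harm_nonneg)
  show "summable (\<lambda>n. 2 * real n powr (-3 / 2))"
    by (intro summable_mult) (simp add: summable_real_powr_iff)
qed

lemma ww_abs_summable: assumes "c \<ge> 1" shows "summable (\<lambda>n. \<bar>ww c n\<bar>)"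
proof (rule summable_comparison_test[of _ "\<lambda>n. inverse (real n ^ 2)"])
  show "\<exists>N. \<forall>n\<ge>N. norm \<bar>ww c n\<bar> \<le> inverse (real n ^ 2)"
    using order.trans[OF wwc_abs_le'[OF assms] ww1_abs_le] by (auto simp: inverse_eq_divide)
  show "summable (\<lambda>n. inverse (real n ^ 2))" by (rule inverse_power_summable) simp
qed

lemma wwhh_le: assumes c: "c \<ge> 1" shows "\<bar>ww c n * hh c n\<bar> \<le> gg n / c"
proof (cases "n \<ge> 1")
  case False then have "n = 0" by simp
  then show ?thesis by (simp add: hh_def gg_def harm_def)
next
  case True
  have h0: "hh c n \<ge> 0" using c by (intro hh_nonneg) simp
  have "\<bar>ww c n * hh c n\<bar> = \<bar>ww c n\<bar> * hh c n" using h0 by (simp add: abs_mult)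
  also have "\<dots> \<le> (\<bar>ww 1 n\<bar> / c) * harm n"
    using wwc_abs_le[OF c True] c h0 hh_le_harm[OF c, of n]
    by (intro mult_mono) (auto simp: field_simps)
  also have "\<dots> = gg n / c" by (simp add: gg_def)
  finally show ?thesis .
qed

lemma wwhh_summable: assumes c: "c \<ge> 1" shows "summable (\<lambda>n. ww c n * hh c n)"
proof (rule summable_comparison_test[of _ "\<lambda>n. gg n / c"])
  show "\<exists>N. \<forall>n\<ge>N. norm (ww c n * hh c n) \<le> gg n / c" using wwhh_le[OF c] by auto
  show "summable (\<lambda>n. gg n / c)" by (intro summable_divide gg_summable)
qed



definition FF :: "real \<Rightarrow> real" where "FF c = suminf (ww c)"
definition KK :: "real \<Rightarrow> real" where "KK c = suminf (\<lambda>n. ww c n * hh c n)"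

lemma Y_facts:
  assumes c: "c \<ge> 1" and N: "N \<ge> 1"
  shows "0 \<le> ((real N)^2 - 1/4) / (c + real N)" "((real N)^2 - 1/4) / (c + real N) \<le> real N"
proof -
  have N1: "real N \<ge> 1" using N by simp
  have "(real N)^2 \<ge> 1" using N1 by (simp add: one_le_power)
  thus "0 \<le> ((real N)^2 - 1/4) / (c + real N)" using c by simp
  have "0 \<le> real N * c" using N1 c by simp
  thus "((real N)^2 - 1/4) / (c + real N) \<le> real N" using c N1
    by (simp add: divide_simps power2_eq_square algebra_simps)
qed

lemma dl_bound: assumes c: "c \<ge> 1" and N: "N \<ge> 1" shows "\<bar>dl c N\<bar> \<le> 1 / real N"
proof -
  define Y where "Y = ((real N)^2 - 1/4) / (c + real N)"
  have y0: "0 \<le> Y" and y1: "Y \<le> real N" using Y_facts[OF c N] unfolding Y_def by auto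
  have N1: "real N \<ge> 1" using N by simp
  have "dl c N = - ((c * ww c N) * Y)" unfolding dl_def Y_def by simp
  hence "\<bar>dl c N\<bar> = (c * \<bar>ww c N\<bar>) * Y" using y0 c by (simp add: abs_mult)
  also have "\<dots> \<le> (1 / (real N)^2) * real N"
    using order.trans[OF wwc_abs_le[OF c N] ww1_abs_le[OF N]] y1 y0
    by (intro mult_mono) auto
  also have "\<dots> = 1 / real N" using N1 by (simp add: power2_eq_square)
  finally show ?thesis .
qed

lemma dl_lim: assumes c: "c \<ge> 1" shows "dl c \<longlonglongrightarrow> 0"
proof (rule Lim_null_comparison[of _ "\<lambda>N. 1 / real N"])
  show "\<forall>\<^sub>F N in sequentially. norm (dl c N) \<le> 1 / real N"
    using dl_bound[OF c] by (auto simp: eventually_sequentially intro!: exI[of _ 1])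
  show "(\<lambda>N. 1 / real N) \<longlonglongrightarrow> 0" by (rule lim_inverse_n')
qed

lemma ep_bound: assumes c: "c \<ge> 1" and N: "N \<ge> 1"
  shows "\<bar>ep c N\<bar> \<le> (1 + 2 * sqrt (real N)) / real N"
proof -
  define Y where "Y = ((real N)^2 - 1/4) / (c + real N)"
  define Z where "Z = real N / (c + real N) - c * hh c N"
  define X where "X = \<bar>ww c N\<bar>"
  define V where "V = \<bar>ww 1 N\<bar>"
  have y0: "0 \<le> Y" and y1: "Y \<le> real N" using Y_facts[OF c N] unfolding Y_def by auto
  have N1: "real N \<ge> 1" using N by simp
  have h0: "hh c N \<ge> 0" using c by (intro hh_nonneg) simp
  have hle: "hh c N \<le> harm N" by (rule hh_le_harm[OF c])
  have x0: "X \<ge> 0" unfolding X_def by simp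
  have xv: "X \<le> V" unfolding X_def V_def by (rule wwc_abs_le'[OF c])
  have cxv: "c * X \<le> V" unfolding X_def V_def by (rule wwc_abs_le[OF c N])
  have v1: "V \<le> 1 / (real N)^2" unfolding V_def by (rule ww1_abs_le[OF N])
  have z: "\<bar>Z\<bar> \<le> 1 + c * hh c N"
  proof -
    have a: "0 \<le> real N / (c + real N)" "real N / (c + real N) \<le> 1" using c by auto
    have "\<bar>Z\<bar> \<le> \<bar>real N / (c + real N)\<bar> + \<bar>c * hh c N\<bar>" unfolding Z_def by (rule abs_triangle_ineq4)
    moreover have "\<bar>c * hh c N\<bar> = c * hh c N" using h0 c by simp
    ultimately show ?thesis using a by linarith
  qed
  have "ep c N = - (ww c N * Y * Z)" unfolding ep_def Y_def Z_def by simp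
  hence "\<bar>ep c N\<bar> = X * Y * \<bar>Z\<bar>" unfolding X_def using y0 by (simp add: abs_mult)
  also have "\<dots> \<le> X * real N * (1 + c * hh c N)"
    using x0 y0 y1 z by (intro mult_mono) auto
  also have "\<dots> = real N * X + real N * (c * X) * hh c N" by (simp add: algebra_simps)
  also have "\<dots> \<le> real N * V + real N * V * harm N"
    using xv cxv hle h0 N1 x0 c
    by (intro add_mono mult_mono mult_left_mono) auto
  also have "\<dots> = real N * V * (1 + harm N)" by (simp add: algebra_simps)
  also have "\<dots> \<le> real N * (1 / (real N)^2) * (1 + 2 * sqrt (real N))"
  proof -
    have "0 \<le> (harm N :: real)" by (rule harm_nonneg)
    hence hp: "0 \<le> 1 + (harm N :: real)" by linarith
    have hs: "1 + harm N \<le> 1 + 2 * sqrt (real N)" using harm_sqrt[of N] by linarith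
    have "V \<ge> 0" unfolding V_def by simp
    show ?thesis using v1 hp hs N1 \<open>V \<ge> 0\<close>
      by (intro mult_mono mult_left_mono) auto
  qed
  also have "\<dots> = (1 + 2 * sqrt (real N)) / real N" using N1 by (simp add: power2_eq_square)
  finally show ?thesis .
qed

lemma ep_lim: assumes c: "c \<ge> 1" shows "ep c \<longlonglongrightarrow> 0"
proof (rule Lim_null_comparison[of _ "\<lambda>N. (1 + 2 * sqrt (real N)) / real N"])
  show "\<forall>\<^sub>F N in sequentially. norm (ep c N) \<le> (1 + 2 * sqrt (real N)) / real N"
    using ep_bound[OF c] by (auto simp: eventually_sequentially intro!: exI[of _ 1])
  show "(\<lambda>N. (1 + 2 * sqrt (real N)) / real N) \<longlonglongrightarrow> 0" by real_asymp
qed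

lemma ww_summable: "c \<ge> 1 \<Longrightarrow> summable (ww c)"
  by (rule summable_rabs_cancel) (rule ww_abs_summable)

lemma FF_rec: assumes c: "c \<ge> 1" shows "c^2 * FF c = (c^2 - 1/4) * FF (c+1)"
proof -
  have c1: "c + 1 \<ge> 1" using c by simp
  have s1: "(\<lambda>n. c^2 * ww c n - (c^2 - 1/4) * ww (c+1) n) sums (c^2 * FF c - (c^2 - 1/4) * FF (c+1))"
    unfolding FF_def
    by (intro sums_diff sums_mult summable_sums ww_summable c c1)
  have s2: "(\<lambda>n. c^2 * ww c n - (c^2 - 1/4) * ww (c+1) n) sums 0"
    unfolding sums_def
    by (rule LIMSEQ_imp_Suc) (use dl_lim[OF c] tele1[of c] c in simp)
  show ?thesis using sums_unique2[OF s1 s2] by simp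
qed

lemma KK_rec: assumes c: "c \<ge> 1"
  shows "2*c*FF c - c^2 * KK c - 2*c*FF (c+1) + (c^2 - 1/4) * KK (c+1) = 0"
proof -
  have c1: "c + 1 \<ge> 1" using c by simp
  have eq: "tau c = (\<lambda>n. (2*c) * ww c n - c^2 * (ww c n * hh c n) - (2*c) * ww (c+1) n
              + (c^2 - 1/4) * (ww (c+1) n * hh (c+1) n))"
    by (simp add: fun_eq_iff tau_def mult.assoc)
  have s1: "tau c sums (2*c*FF c - c^2 * KK c - 2*c*FF (c+1) + (c^2 - 1/4) * KK (c+1))"
    unfolding eq FF_def KK_def
    by (intro sums_add sums_diff sums_mult summable_sums ww_summable wwhh_summable c c1)
  have s2: "tau c sums 0"
    unfolding sums_def
    by (rule LIMSEQ_imp_Suc) (use ep_lim[OF c] tele2[of c] c in simp)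
  show ?thesis using sums_unique2[OF s1 s2] by simp
qed


lemma ww1_partial: "(\<Sum>n<Suc N. ww 1 n) = (2 * real N + 1) * aa N"
proof (induction N)
  case 0 then show ?case by (simp add: aa_def)
next
  case (Suc N)
  have p: "2 * real N + 1 \<noteq> 0" "2 * real N + 2 \<noteq> 0" by (simp_all add: add_nonneg_pos)
  have "(\<Sum>n<Suc (Suc N). ww 1 n) = (2 * real N + 1) * aa N + ww 1 (Suc N)" using Suc.IH by simp
  also have "\<dots> = (2 * real (Suc N) + 1) * aa (Suc N)"
    unfolding ww1_aa[of "Suc N"] aa_Suc using p
    by (simp add: divide_simps) (simp add: algebra_simps power2_eq_square)
  finally show ?case .
qed

lemma wallis_prod: "(2 * real N + 1) * aa N * (\<Prod>k=1..N. (4 * real k^2) / (4 * real k^2 - 1)) = 1"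
proof (induction N)
  case 0 then show ?case by (simp add: aa_def)
next
  case (Suc N)
  define P where "P = (\<Prod>k=1..N. (4 * real k^2) / (4 * real k^2 - 1))"
  have p: "2 * real N + 1 \<noteq> 0" "2 * real N + 2 \<noteq> 0" "2 * real N + 3 \<noteq> 0" by (simp_all add: add_nonneg_pos)
  have q: "4 * real (Suc N)^2 - 1 = (2 * real N + 1) * (2 * real N + 3)" by (simp add: power2_eq_square algebra_simps)
  have "(\<Prod>k=1..Suc N. (4 * real k^2) / (4 * real k^2 - 1)) = P * ((4 * real (Suc N)^2) / (4 * real (Suc N)^2 - 1))"
    unfolding P_def by (simp add: prod.cl_ivl_Suc)
  hence "(2 * real (Suc N) + 1) * aa (Suc N) * (\<Prod>k=1..Suc N. (4 * real k^2) / (4 * real k^2 - 1))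
      = (2 * real (Suc N) + 1) * (aa N * ((2*real N + 1) / (2*real N + 2))^2) * (P * ((4 * real (Suc N)^2) / ((2 * real N + 1) * (2 * real N + 3))))"
    unfolding aa_Suc q by simp
  also have "\<dots> = (2 * real N + 1) * aa N * P"
    using p by (simp add: divide_simps) (simp add: algebra_simps power2_eq_square)
  also have "\<dots> = 1" using Suc.IH unfolding P_def .
  finally show ?case .
qed

lemma aa_lim: "(\<lambda>N. (2 * real N + 1) * aa N) \<longlonglongrightarrow> 2 / pi"
proof -
  have w: "(\<lambda>N. \<Prod>k=1..N. (4 * real k^2) / (4 * real k^2 - 1)) \<longlonglongrightarrow> pi / 2" by (rule wallis)
  have "(\<lambda>N. inverse (\<Prod>k=1..N. (4 * real k^2) / (4 * real k^2 - 1))) \<longlonglongrightarrow> inverse (pi / 2)"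
    by (rule tendsto_inverse[OF w]) simp
  moreover have "(\<lambda>N. inverse (\<Prod>k=1..N. (4 * real k^2) / (4 * real k^2 - 1))) = (\<lambda>N. (2 * real N + 1) * aa N)"
  proof
    fix N show "inverse (\<Prod>k=1..N. (4 * real k^2) / (4 * real k^2 - 1)) = (2 * real N + 1) * aa N"
      using wallis_prod[of N] by (simp add: inverse_unique mult.commute)
  qed
  ultimately show ?thesis by simp
qed

lemma FF1: "FF 1 = 2 / pi"
proof -
  have "ww 1 sums (2 / pi)"
    unfolding sums_def
    by (rule LIMSEQ_imp_Suc) (use aa_lim ww1_partial in simp)
  thus ?thesis unfolding FF_def by (rule sums_unique[symmetric])
qed

lemma harm_double_lim: "(\<lambda>N. harm (2*N) - harm N :: real) \<longlonglongrightarrow> ln 2"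
proof -
  define e where "e n = harm n - ln (real n)" for n
  have e1: "e \<longlonglongrightarrow> euler_mascheroni" unfolding e_def by (rule euler_mascheroni_LIMSEQ)
  have sm: "strict_mono (\<lambda>n::nat. 2*n)" by (simp add: strict_mono_def)
  have e2: "(\<lambda>n. e (2*n)) \<longlonglongrightarrow> euler_mascheroni"
    using LIMSEQ_subseq_LIMSEQ[OF e1 sm] by (simp add: o_def)
  have "(\<lambda>n. e (2*n) - e n + ln 2) \<longlonglongrightarrow> euler_mascheroni - euler_mascheroni + ln 2"
    by (intro tendsto_add tendsto_diff e1 e2 tendsto_const)
  hence l: "(\<lambda>n. e (2*n) - e n + ln 2) \<longlonglongrightarrow> ln 2" by simp
  show ?thesis
  proof (rule Lim_transform_eventually[OF l])
    show "\<forall>\<^sub>F n in sequentially. e (2*n) - e n + ln 2 = harm (2*n) - harm n"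
      unfolding eventually_sequentially
    proof (intro exI[of _ 1] allI impI)
      fix n :: nat assume "n \<ge> 1"
      hence "real n > 0" by simp
      hence "ln (real (2*n)) = ln 2 + ln (real n)" by (simp add: ln_mult)
      thus "e (2*n) - e n + ln 2 = harm (2*n) - harm n" unfolding e_def by simp
    qed
  qed
qed

lemma hdiff_partial: "(\<Sum>n<Suc N. ww 1 n * (harm (2*n) - harm n))
   = (2 * real N + 1) * aa N * (harm (2*N) - harm N - 1) + aa N"
proof (induction N)
  case 0 then show ?case by (simp add: aa_def harm_def)
next
  case (Suc N)
  have p: "2 * real N + 1 \<noteq> 0" "2 * real N + 2 \<noteq> 0" "real N + 1 \<noteq> 0" by (simp_all add: add_nonneg_pos)
  have h2: "harm (2 * Suc N) = harm (2*N) + 1 / (2 * real N + 1) + 1 / (2 * real N + 2)"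
  proof -
    have "2 * Suc N = Suc (Suc (2*N))" by simp
    thus ?thesis by (simp add: harm_Suc inverse_eq_divide add_ac)
  qed
  have h1: "harm (Suc N) = harm N + 1 / (real N + 1)" by (simp add: harm_Suc inverse_eq_divide add_ac)
  have "(\<Sum>n<Suc (Suc N). ww 1 n * (harm (2*n) - harm n))
      = (2 * real N + 1) * aa N * (harm (2*N) - harm N - 1) + aa N + ww 1 (Suc N) * (harm (2 * Suc N) - harm (Suc N))"
    using Suc.IH by simp
  also have "\<dots> = (2 * real (Suc N) + 1) * aa (Suc N) * (harm (2*Suc N) - harm (Suc N) - 1) + aa (Suc N)"
    unfolding ww1_aa[of "Suc N"] aa_Suc h2 h1 using p
    by (simp add: divide_simps) (simp add: algebra_simps power2_eq_square)
  finally show ?case .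
qed

lemma hdiff_sums: "(\<lambda>n. ww 1 n * (harm (2*n) - harm n)) sums (2 / pi * (ln 2 - 1))"
proof -
  have a0: "(\<lambda>N. ((2 * real N + 1) * aa N) * (1 / (2 * real N + 1))) \<longlonglongrightarrow> 2 / pi * 0"
    by (intro tendsto_mult aa_lim) real_asymp
  have a1: "(\<lambda>N. ((2 * real N + 1) * aa N) * (1 / (2 * real N + 1))) = aa"
  proof
    fix N
    have "2 * real N + 1 \<noteq> 0" by (simp add: add_nonneg_pos)
    thus "(2 * real N + 1) * aa N * (1 / (2 * real N + 1)) = aa N" by simp
  qed
  have l: "(\<lambda>N. (2 * real N + 1) * aa N * (harm (2*N) - harm N - 1) + aa N) \<longlonglongrightarrow> 2 / pi * (ln 2 - 1) + 0"
    using a0 unfolding a1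
    by (intro tendsto_add tendsto_mult tendsto_diff aa_lim harm_double_lim tendsto_const) simp_all
  show ?thesis
    unfolding sums_def
    by (rule LIMSEQ_imp_Suc) (use l hdiff_partial in simp)
qed



lemma FF_ge: "FF (real m + 1) \<ge> 2 / pi"
proof (induction m)
  case 0 then show ?case using FF1 by simp
next
  case (Suc m)
  define c where "c = real m + 1"
  have c1: "c \<ge> 1" unfolding c_def by simp
  have F0: "FF c \<ge> 2 / pi" using Suc.IH unfolding c_def .
  have Fpos: "FF c > 0" using F0 pi_gt_zero by (meson divide_pos_pos order_less_le_trans zero_less_numeral)
  have d: "c^2 - 1/4 > 0"
  proof -
    have "c^2 \<ge> 1" using c1 by (simp add: one_le_power)
    thus ?thesis by simp
  qed
  have r: "c^2 * FF c = (c^2 - 1/4) * FF (c+1)" by (rule FF_rec[OF c1])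
  have "(c^2 - 1/4) * FF c \<le> c^2 * FF c" using Fpos by (simp add: mult_right_mono)
  hence "(c^2 - 1/4) * FF c \<le> (c^2 - 1/4) * FF (c+1)" using r by simp
  hence "FF c \<le> FF (c+1)" using d by (simp add: mult_le_cancel_left_pos)
  moreover have "real (Suc m) + 1 = c + 1" unfolding c_def by simp
  ultimately show ?case using F0 by simp
qed

lemma L_step:
  fixes c F0 F1 K0 K1 :: real
  assumes c: "c \<ge> 1" and F0: "F0 > 0"
    and r1: "c^2 * F0 = (c^2 - 1/4) * F1"
    and r2: "2*c*F0 - c^2 * K0 - 2*c*F1 + (c^2 - 1/4) * K1 = 0"
  shows "K0 / F0 = K1 / F1 + (2/c - 2/(2*c - 1) - 2/(2*c + 1))"
proof -
  define d where "d = c^2 - 1/4"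
  have cs: "c^2 \<ge> 1" using c by (simp add: one_le_power)
  have d0: "d > 0" unfolding d_def using cs by simp
  have c0: "c > 0" using c by simp
  have e1: "F1 = c^2 * F0 / d" using r1 d0 unfolding d_def[symmetric] by (simp add: field_simps)
  have e2: "K0 = (2*c*F0 - 2*c*F1 + d*K1) / c^2" using r2 c0 unfolding d_def[symmetric] by (simp add: field_simps)
  have p: "2*c - 1 > 0" "2*c + 1 > 0" using c by auto
  have dd: "d = (2*c - 1) * (2*c + 1) / 4" unfolding d_def by (simp add: power2_eq_square algebra_simps)
  show ?thesis unfolding e2 unfolding e1 using p c0 F0 d0 unfolding dd
    by (simp add: divide_simps) (simp add: algebra_simps power2_eq_square)
qed

definition gsum :: "nat \<Rightarrow> real" where
  "gsum m = (\<Sum>j<m. 2/(real j + 1) - 2/(2*(real j + 1) - 1) - 2/(2*(real j + 1) + 1))"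

lemma ratio_chain: "KK 1 / FF 1 = KK (real m + 1) / FF (real m + 1) + gsum m"
proof (induction m)
  case 0 then show ?case by (simp add: gsum_def)
next
  case (Suc m)
  define c where "c = real m + 1"
  have c1: "c \<ge> 1" unfolding c_def by simp
  have F0: "FF c > 0" using FF_ge[of m] pi_gt_zero unfolding c_def[symmetric]
    by (meson divide_pos_pos order_less_le_trans zero_less_numeral)
  have st: "KK c / FF c = KK (c+1) / FF (c+1) + (2/c - 2/(2*c - 1) - 2/(2*c + 1))"
    by (rule L_step[OF c1 F0 FF_rec[OF c1] KK_rec[OF c1]])
  have e: "real (Suc m) + 1 = c + 1" unfolding c_def by simp
  have g: "gsum (Suc m) = gsum m + (2/c - 2/(2*c - 1) - 2/(2*c + 1))"
    unfolding gsum_def c_def by simp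
  show ?case unfolding e g using Suc.IH st unfolding c_def[symmetric] by simp
qed

lemma gsum_closed: "gsum m = 4 * (harm m - harm (2*m)) + 2 - 2 / (2 * real m + 1)"
proof (induction m)
  case 0 then show ?case by (simp add: gsum_def harm_def)
next
  case (Suc m)
  have p: "2 * real m + 1 \<noteq> 0" "2 * real m + 2 \<noteq> 0" "real m + 1 \<noteq> 0" "2 * real m + 3 \<noteq> 0"
    by (simp_all add: add_nonneg_pos)
  have h2: "harm (2 * Suc m) = harm (2*m) + 1 / (2 * real m + 1) + 1 / (2 * real m + 2)"
  proof -
    have "2 * Suc m = Suc (Suc (2*m))" by simp
    thus ?thesis by (simp add: harm_Suc inverse_eq_divide add_ac)
  qed
  have h1: "harm (Suc m) = harm m + 1 / (real m + 1)" by (simp add: harm_Suc inverse_eq_divide add_ac)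
  have g: "gsum (Suc m) = gsum m + (2/(real m + 1) - 2/(2*(real m + 1) - 1) - 2/(2*(real m + 1) + 1))"
    unfolding gsum_def by simp
  show ?case unfolding g Suc.IH h2 h1 using p
    by (simp add: divide_simps) (simp add: algebra_simps)
qed

lemma gsum_lim: "gsum \<longlonglongrightarrow> 2 - 4 * ln 2"
proof -
  have a: "(\<lambda>m. harm m - harm (2*m) :: real) \<longlonglongrightarrow> - ln 2"
    using tendsto_minus[OF harm_double_lim] by simp
  have b: "(\<lambda>m. 2 / (2 * real m + 1)) \<longlonglongrightarrow> 0" by real_asymp
  have "(\<lambda>m. 4 * (harm m - harm (2*m)) + 2 - 2 / (2 * real m + 1)) \<longlonglongrightarrow> 4 * (- ln 2) + 2 - 0"
    by (intro tendsto_diff tendsto_add tendsto_mult tendsto_const a b)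
  thus ?thesis unfolding gsum_closed[abs_def] by simp
qed

lemma ratio_lim: "(\<lambda>m. KK (real m + 1) / FF (real m + 1)) \<longlonglongrightarrow> 0"
proof (rule Lim_null_comparison[of _ "\<lambda>m. (suminf gg * pi / 2) * (1 / (real m + 1))"])
  show "\<forall>\<^sub>F m in sequentially. norm (KK (real m + 1) / FF (real m + 1)) \<le> (suminf gg * pi / 2) * (1 / (real m + 1))"
  proof (intro always_eventually allI)
    fix m :: nat
    define c where "c = real m + 1"
    have c1: "c \<ge> 1" unfolding c_def by simp
    have F0: "FF c \<ge> 2 / pi" using FF_ge[of m] unfolding c_def .
    have Fpos: "FF c > 0" using F0 pi_gt_zero by (meson divide_pos_pos order_less_le_trans zero_less_numeral)
    have K: "\<bar>KK c\<bar> \<le> suminf gg / c"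
    proof -
      have "norm (KK c) \<le> suminf (\<lambda>n. gg n / c)"
        unfolding KK_def
        by (rule norm_suminf_le) (use wwhh_le[OF c1] in \<open>auto intro: summable_divide gg_summable\<close>)
      also have "\<dots> = suminf gg / c" by (rule suminf_divide[OF gg_summable])
      finally show ?thesis by simp
    qed
    have G: "suminf gg \<ge> 0" by (rule suminf_nonneg[OF gg_summable]) (simp add: gg_def harm_nonneg)
    have "\<bar>KK c / FF c\<bar> = \<bar>KK c\<bar> / FF c" using Fpos by simp
    also have "\<dots> \<le> (suminf gg / c) / (2 / pi)"
      using K F0 Fpos G c1 by (intro frac_le) auto
    also have "\<dots> = (suminf gg * pi / 2) * (1 / c)" using c1 by (simp add: field_simps)
    finally show "norm (KK (real m + 1) / FF (real m + 1)) \<le> (suminf gg * pi / 2) * (1 / (real m + 1))"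
      unfolding c_def by simp
  qed
  have "(\<lambda>m. 1 / (real m + 1)) \<longlonglongrightarrow> 0" by real_asymp
  from tendsto_mult[OF tendsto_const this, of "suminf gg * pi / 2"]
  show "(\<lambda>m. (suminf gg * pi / 2) * (1 / (real m + 1))) \<longlonglongrightarrow> 0" by simp
qed

lemma KK1: "KK 1 = 2 / pi * (2 - 4 * ln 2)"
proof -
  have "(\<lambda>m. KK (real m + 1) / FF (real m + 1) + gsum m) \<longlonglongrightarrow> 0 + (2 - 4 * ln 2)"
    by (intro tendsto_add ratio_lim gsum_lim)
  hence "(\<lambda>m. KK 1 / FF 1) \<longlonglongrightarrow> 2 - 4 * ln 2" using ratio_chain by simp
  hence "KK 1 / FF 1 = 2 - 4 * ln 2" using LIMSEQ_unique tendsto_const by blast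
  thus ?thesis unfolding FF1 by (simp add: field_simps)
qed

theorem mainTheorem9:
  shows "(\<lambda>n::nat. (real ((2*n) choose n))^2 * harm (2*n) / (16^n * (2 * real n - 1)))
           sums ((6 * ln 2 - 2) / pi)"
proof -
  have t1: "(\<lambda>n. ww 1 n * harm n) sums KK 1"
    using summable_sums[OF wwhh_summable[of 1]] unfolding KK_def hh_one by simp
  have t2: "(\<lambda>n. ww 1 n * (harm (2*n) - harm n)) sums (2 / pi * (ln 2 - 1))" by (rule hdiff_sums)
  have s: "(\<lambda>n. - (ww 1 n * (harm (2*n) - harm n)) - ww 1 n * harm n) sums (- (2 / pi * (ln 2 - 1)) - KK 1)"
    by (intro sums_diff sums_minus t1 t2)
  have e: "(\<lambda>n. - (ww 1 n * (harm (2*n) - harm n)) - ww 1 n * harm n)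
         = (\<lambda>n::nat. (real ((2*n) choose n))^2 * harm (2*n) / (16^n * (2 * real n - 1)))"
  proof
    fix n :: nat
    show "- (ww 1 n * (harm (2*n) - harm n)) - ww 1 n * harm n
         = (real ((2*n) choose n))^2 * harm (2*n) / (16^n * (2 * real n - 1))"
    proof -
      have nz: "2 * real n - 1 \<noteq> 0"
      proof
        assume "2 * real n - 1 = 0" hence "real (2*n) = real 1" by simp
        hence "2*n = 1" by (simp only: of_nat_eq_iff)
        thus False by presburger
      qed
      show ?thesis unfolding ww1_aa aa_def using nz by (simp add: divide_simps) (simp add: algebra_simps)
    qed
  qed
  have v: "- (2 / pi * (ln 2 - 1)) - KK 1 = (6 * ln 2 - 2) / pi"
    unfolding KK1 by (simp add: field_simps)
  show ?thesis using s unfolding e v .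
qed

end
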